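(* A finite groupoid $\langle A;\cdot\rangle$ with an identity element is an Abelian algebra if and only if it is a commutative group.
   Context: A groupoid is an algebra $\langle A;\cdot\rangle$ with one binary operation; an identity element is $1\in A$ with $1\cdot a=a\cdot 1=a$ for all $a$. A polynomial operation of an algebra is an operation obtained from a term by substituting elements of the algebra for some of its variables. An algebra is called Abelian if for every polynomial operation $t(x,y_1,\ldots,y_n)$ and all elements $u,v,c_1,\ldots,c_n,d_1,\ldots,d_n$ of the algebra, $t(u,c_1,\ldots,c_n)=t(u,d_1,\ldots,d_n)$ implies $t(v,c_1,\ldots,c_n)=t(v,d_1,\ldots,d_n)$. *)

theory Defs
  imports "HOL-Algebra.Group"
begin

text \<open>Terms of the groupoid signature (one binary operation) over variables
  indexed by natural numbers, with constants (elements of the algebra)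
  allowed; these represent polynomial operations.\<close>

datatype 'a gterm = Var nat | Const 'a | Mul "'a gterm" "'a gterm"

primrec geval :: "('a \<Rightarrow> 'a \<Rightarrow> 'a) \<Rightarrow> (nat \<Rightarrow> 'a) \<Rightarrow> 'a gterm \<Rightarrow> 'a" where
  "geval f env (Var i) = env i"
| "geval f env (Const a) = a"
| "geval f env (Mul s t) = f (geval f env s) (geval f env t)"

primrec gconsts :: "'a gterm \<Rightarrow> 'a set" where
  "gconsts (Var i) = {}"
| "gconsts (Const a) = {a}"
| "gconsts (Mul s t) = gconsts s \<union> gconsts t"

definition groupoid :: "'a set \<Rightarrow> ('a \<Rightarrow> 'a \<Rightarrow> 'a) \<Rightarrow> bool" where
  "groupoid A f \<longleftrightarrow> (\<forall>a\<in>A. \<forall>b\<in>A. f a b \<in> A)"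

definition is_identity :: "'a set \<Rightarrow> ('a \<Rightarrow> 'a \<Rightarrow> 'a) \<Rightarrow> 'a \<Rightarrow> bool" where
  "is_identity A f e \<longleftrightarrow> e \<in> A \<and> (\<forall>a\<in>A. f e a = a \<and> f a e = a)"

text \<open>Abelian algebra: for every polynomial operation t(x, y_1, ...), with x
  the variable 0 and the remaining variables the y's, and all elements
  u, v, c, d of A: t(u, c) = t(u, d) implies t(v, c) = t(v, d).\<close>
definition abelian_groupoid :: "'a set \<Rightarrow> ('a \<Rightarrow> 'a \<Rightarrow> 'a) \<Rightarrow> bool" where
  "abelian_groupoid A f \<longleftrightarrow>
     (\<forall>t. gconsts t \<subseteq> A \<longrightarrow>
        (\<forall>u\<in>A. \<forall>v\<in>A. \<forall>c d. (\<forall>i. c i \<in> A) \<longrightarrow> (\<forall>i. d i \<in> A) \<longrightarrow>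
           geval f (c(0 := u)) t = geval f (d(0 := u)) t \<longrightarrow>
           geval f (c(0 := v)) t = geval f (d(0 := v)) t))"

end

theory Submission
  imports Defs
begin

primrec n0 :: "'a gterm \<Rightarrow> nat" where
  "n0 (Var i) = (if i = 0 then 1 else 0)"
| "n0 (Const a) = 0"
| "n0 (Mul s t) = n0 s + n0 t"

lemma (in comm_group) geval_decomp:
  assumes "gconsts t \<subseteq> carrier G" "\<forall>i. c i \<in> carrier G" "u \<in> carrier G"
  shows "geval (\<otimes>) (c(0:=u)) t = u [^] n0 t \<otimes> geval (\<otimes>) (c(0:=\<one>)) t
         \<and> geval (\<otimes>) (c(0:=u)) t \<in> carrier G \<and> geval (\<otimes>) (c(0:=\<one>)) t \<in> carrier G"
  using assms(1)
proof (induction t)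
  case (Var i)
  then show ?case using assms by auto
next
  case (Const a)
  then show ?case by auto
next
  case (Mul s t)
  have ps: "gconsts s \<subseteq> carrier G" "gconsts t \<subseteq> carrier G" using Mul.prems by auto
  note s = Mul.IH(1)[OF ps(1)] and t = Mul.IH(2)[OF ps(2)]
  have s: "geval (\<otimes>) (c(0:=u)) s = u [^] n0 s \<otimes> geval (\<otimes>) (c(0:=\<one>)) s"
    "geval (\<otimes>) (c(0:=\<one>)) s \<in> carrier G" "geval (\<otimes>) (c(0:=u)) s \<in> carrier G"
    and t: "geval (\<otimes>) (c(0:=u)) t = u [^] n0 t \<otimes> geval (\<otimes>) (c(0:=\<one>)) t"
    "geval (\<otimes>) (c(0:=\<one>)) t \<in> carrier G" "geval (\<otimes>) (c(0:=u)) t \<in> carrier G"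
    using s t by blast+
  have "geval (\<otimes>) (c(0:=u)) (Mul s t) = (u [^] n0 s \<otimes> geval (\<otimes>) (c(0:=\<one>)) s) \<otimes> (u [^] n0 t \<otimes> geval (\<otimes>) (c(0:=\<one>)) t)"
    by (simp only: geval.simps s(1) t(1))
  also have "\<dots> = u [^] n0 (Mul s t) \<otimes> geval (\<otimes>) (c(0:=\<one>)) (Mul s t)"
    using s t assms(3) by (simp only: geval.simps n0.simps nat_pow_mult[symmetric, OF assms(3)]) (simp add: m_ac)
  finally show ?case using s t by (simp only: geval.simps) (simp add: assms(3))
qed

lemma (in comm_group) abelian: "abelian_groupoid (carrier G) (\<otimes>)"
  unfolding abelian_groupoid_def
proof (intro allI impI ballI)
  fix t u v c d
  assume t: "gconsts t \<subseteq> carrier G" and u: "u \<in> carrier G" and v: "v \<in> carrier G"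
    and c: "\<forall>i. c i \<in> carrier G" and d: "\<forall>i. d i \<in> carrier G"
    and eq: "geval (\<otimes>) (c(0 := u)) t = geval (\<otimes>) (d(0 := u)) t"
  note cu = geval_decomp[OF t c u] and du = geval_decomp[OF t d u]
  note cv = geval_decomp[OF t c v] and dv = geval_decomp[OF t d v]
  have "geval (\<otimes>) (c(0:=\<one>)) t = geval (\<otimes>) (d(0:=\<one>)) t"
    using eq cu du u by (metis Units_eq Units_l_cancel nat_pow_closed)
  then show "geval (\<otimes>) (c(0 := v)) t = geval (\<otimes>) (d(0 := v)) t"
    using cv dv by simp
qed

lemma ab_use:
  assumes "abelian_groupoid A f" "gconsts t \<subseteq> A" "u \<in> A" "v \<in> A"
    "\<forall>i. c i \<in> A" "\<forall>i. d i \<in> A"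
    "geval f (c(0:=u)) t = geval f (d(0:=u)) t"
  shows "geval f (c(0:=v)) t = geval f (d(0:=v)) t"
  using assms unfolding abelian_groupoid_def by blast

definition env2 :: "'a \<Rightarrow> 'a \<Rightarrow> 'a \<Rightarrow> nat \<Rightarrow> 'a" where
  "env2 e a b = (\<lambda>_. e)(1 := a, 2 := b)"

theorem mainTheorem2:
  fixes A :: "'a set" and f :: "'a \<Rightarrow> 'a \<Rightarrow> 'a" and e :: 'a
  assumes "finite A" and "groupoid A f" and "is_identity A f e"
  shows "abelian_groupoid A f \<longleftrightarrow> comm_group \<lparr>carrier = A, mult = f, one = e\<rparr>"
proof
  assume cg: "comm_group \<lparr>carrier = A, mult = f, one = e\<rparr>"
  show "abelian_groupoid A f" using comm_group.abelian[OF cg] by simp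
next
  assume ab: "abelian_groupoid A f"
  have cl: "\<And>x y. x \<in> A \<Longrightarrow> y \<in> A \<Longrightarrow> f x y \<in> A" using assms(2) unfolding groupoid_def by blast
  have eA: "e \<in> A" and el: "\<And>x. x \<in> A \<Longrightarrow> f e x = x" and er: "\<And>x. x \<in> A \<Longrightarrow> f x e = x"
    using assms(3) unfolding is_identity_def by auto
  define env where "env = env2 e"
  have envA: "a \<in> A \<Longrightarrow> b \<in> A \<Longrightarrow> \<forall>i. env a b i \<in> A" for a b
    using eA unfolding env_def env2_def by auto
  let ?T = "Mul (Mul (Var 1) (Var 0)) (Var 2) :: 'a gterm"
  have comm: "f a b = f b a" if a: "a \<in> A" and b: "b \<in> A" for a b
  proof -
    have "geval f ((env e a)(0:=b)) ?T = geval f ((env a e)(0:=b)) ?T"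
      by (rule ab_use[OF ab _ eA b envA envA]) (auto simp: env_def env2_def a b eA el er)
    then show ?thesis by (simp add: env_def env2_def el er a b cl)
  qed
  have assoc: "f (f a b) c = f a (f b c)" if a: "a \<in> A" and b: "b \<in> A" and c: "c \<in> A" for a b c
  proof -
    have "geval f ((env a c)(0:=b)) ?T = geval f ((env c a)(0:=b)) ?T"
      by (rule ab_use[OF ab _ eA b envA envA]) (auto simp: env_def env2_def a c eA el er comm)
    then have "f (f a b) c = f (f c b) a" by (simp add: env_def env2_def)
    also have "\<dots> = f a (f b c)" using comm a b c cl by metis
    finally show ?thesis .
  qed
  let ?S = "Mul (Var 0) (Var 1) :: 'a gterm"
  have canc: "b = c" if a: "a \<in> A" and b: "b \<in> A" and c: "c \<in> A" and eq: "f a b = f a c" for a b c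
  proof -
    have "geval f ((env b e)(0:=e)) ?S = geval f ((env c e)(0:=e)) ?S"
      by (rule ab_use[OF ab _ a eA envA envA]) (auto simp: env_def env2_def a b c eA eq)
    then show ?thesis by (simp add: env_def env2_def el b c)
  qed
  have inv: "\<exists>y\<in>A. f y x = e" if x: "x \<in> A" for x
  proof -
    have "inj_on (f x) A" by (rule inj_onI) (use canc x in blast)
    moreover have "f x ` A \<subseteq> A" using cl x by auto
    ultimately have "f x ` A = A" using endo_inj_surj[OF assms(1)] by blast
    then obtain y where "y \<in> A" "f x y = e" using eA by (metis imageE)
    then show ?thesis using comm x by metis
  qed
  show "comm_group \<lparr>carrier = A, mult = f, one = e\<rparr>"
      proof (rule comm_groupI)
    fix x y assume "x \<in> carrier \<lparr>carrier = A, mult = f, one = e\<rparr>" "y \<in> carrier \<lparr>carrier = A, mult = f, one = e\<rparr>"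
    then show "x \<otimes>\<^bsub>\<lparr>carrier = A, mult = f, one = e\<rparr>\<^esub> y = y \<otimes>\<^bsub>\<lparr>carrier = A, mult = f, one = e\<rparr>\<^esub> x"
      using comm by simp
  qed (simp_all add: cl eA assoc el inv)
qed

end
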